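(* For each $k\ge 1$: if $k$ is odd, then $\Sigma^1_k\text{-}\mathrm{KROM}^r\equiv\Sigma^1_{k+1}\text{-}\mathrm{KROM}^r$; if $k$ is even, then $\Pi^1_k\text{-}\mathrm{KROM}^r\equiv\Pi^1_{k+1}\text{-}\mathrm{KROM}^r$ (equivalence on all finite structures).
   Context: All structures are finite; every vocabulary contains equality. For a vocabulary $\tau$, an SO-KROM$^r(\tau)$ formula is a second-order formula of the form $Q_1R_1\cdots Q_mR_m\forall\bar{x}(C_1\wedge\cdots\wedge C_n)$, where each $Q_i\in\{\forall,\exists\}$, $R_1,\dots,R_m$ are second-order relation variables, and each clause $C_j$ is a disjunction $\beta_1\vee\cdots\vee\beta_q\vee H_1\vee H_2$ in which each $\beta_s$ is an atomic or negated atomic $\tau$-formula ($P\bar{y}$ or $\neg P\bar{y}$, $P\in\tau$, including equality), and each $H_t$ is one of $R_i\bar{z}$, $\neg R_i\bar{z}$, $\exists z_1\cdots\exists z_{r}R_i z_1\dots z_r$ ($r$ the arity of $R_i$), or $\bot$. $\Sigma^1_k\text{-}\mathrm{KROM}^r$ (resp. $\Pi^1_k\text{-}\mathrm{KROM}^r$) is the set of SO-KROM$^r$ formulas whose second-order prefix starts with an existential (resp. universal) quantifier and has exactly $k-1$ alternations between blocks of existential and universal quantifiers. For logics $\mathcal{L}_1,\mathcal{L}_2$, $\mathcal{L}_1\le\mathcal{L}_2$ means every $\mathcal{L}_1$ formula is equivalent to some $\mathcal{L}_2$ formula over the same vocabulary, and $\mathcal{L}_1\equiv\mathcal{L}_2$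 means both $\mathcal{L}_1\le\mathcal{L}_2$ and $\mathcal{L}_2\le\mathcal{L}_1$. *)

theory Defs
  imports Main
begin

text \<open>Second-order variables are referred to
positionally: the i-th entry of the prefix binds the relation variable R_i.\<close>

datatype 'p folit =
    FPos 'p "nat list"
  | FNeg 'p "nat list"
  | FEq nat nat
  | FNeq nat nat

datatype solit =
    SPos nat "nat list"
  | SNeg nat "nat list"
  | SNonempty nat
  | SBot

text \<open>A clause is beta_1 or ... or beta_q or H_1 or H_2.\<close>
type_synonym 'p clause = "'p folit list \<times> solit \<times> solit"

text \<open>A formula Q_1 R_1 ... Q_m R_m forall x (C_1 and ... and C_n):
the prefix lists (is_existential, arity of R_i); the matrix is the clause list.
The first-order universal block quantifies all first-order variables.\<close>
datatype 'p krom = Krom (kpref: "(bool \<times> nat) list") (kmat: "'p clause list")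

fun folit_wf :: "'p set \<Rightarrow> ('p \<Rightarrow> nat) \<Rightarrow> 'p folit \<Rightarrow> bool" where
  "folit_wf tau ar (FPos p ys) = (p \<in> tau \<and> length ys = ar p)"
| "folit_wf tau ar (FNeg p ys) = (p \<in> tau \<and> length ys = ar p)"
| "folit_wf tau ar (FEq x y) = True"
| "folit_wf tau ar (FNeq x y) = True"

fun solit_wf :: "(bool \<times> nat) list \<Rightarrow> solit \<Rightarrow> bool" where
  "solit_wf pre (SPos i zs) = (i < length pre \<and> length zs = snd (pre ! i))"
| "solit_wf pre (SNeg i zs) = (i < length pre \<and> length zs = snd (pre ! i))"
| "solit_wf pre (SNonempty i) = (i < length pre)"
| "solit_wf pre SBot = True"

definition krom_wf :: "'p set \<Rightarrow> ('p \<Rightarrow> nat) \<Rightarrow> nat \<Rightarrow> 'p krom \<Rightarrow> bool" where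
  "krom_wf tau ar r phi \<longleftrightarrow>
     (\<forall>q \<in> set (kpref phi). 1 \<le> snd q \<and> snd q \<le> r) \<and>
     (\<forall>(bs, h1, h2) \<in> set (kmat phi).
        (\<forall>b \<in> set bs. folit_wf tau ar b) \<and> solit_wf (kpref phi) h1 \<and> solit_wf (kpref phi) h2)"

text \<open>Number of blocks of the second-order prefix = number of alternations + 1.\<close>
definition nblocks :: "(bool \<times> nat) list \<Rightarrow> nat" where
  "nblocks pre = length (remdups_adj (map fst pre))"

definition Sigma_krom :: "'p set \<Rightarrow> ('p \<Rightarrow> nat) \<Rightarrow> nat \<Rightarrow> nat \<Rightarrow> 'p krom set" where
  "Sigma_krom tau ar r k = {phi. krom_wf tau ar r phi \<and> kpref phi \<noteq> [] \<and>
      fst (hd (kpref phi)) = True \<and> nblocks (kpref phi) = k}"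

definition Pi_krom :: "'p set \<Rightarrow> ('p \<Rightarrow> nat) \<Rightarrow> nat \<Rightarrow> nat \<Rightarrow> 'p krom set" where
  "Pi_krom tau ar r k = {phi. krom_wf tau ar r phi \<and> kpref phi \<noteq> [] \<and>
      fst (hd (kpref phi)) = False \<and> nblocks (kpref phi) = k}"

text \<open>Finite tau-structures with universe a finite nonempty set of naturals (every finite
structure is isomorphic to one of these).\<close>
definition tuples :: "nat set \<Rightarrow> nat \<Rightarrow> nat list set" where
  "tuples A n = {xs. length xs = n \<and> set xs \<subseteq> A}"

definition is_structure :: "'p set \<Rightarrow> ('p \<Rightarrow> nat) \<Rightarrow> nat set \<Rightarrow> ('p \<Rightarrow> nat list set) \<Rightarrow> bool" where
  "is_structure tau ar A I \<longleftrightarrow> finite A \<and> A \<noteq> {} \<and> (\<forall>p \<in> tau. I p \<subseteq> tuples A (ar p))"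

fun folit_sem :: "('p \<Rightarrow> nat list set) \<Rightarrow> (nat \<Rightarrow> nat) \<Rightarrow> 'p folit \<Rightarrow> bool" where
  "folit_sem I s (FPos p ys) = (map s ys \<in> I p)"
| "folit_sem I s (FNeg p ys) = (map s ys \<notin> I p)"
| "folit_sem I s (FEq x y) = (s x = s y)"
| "folit_sem I s (FNeq x y) = (s x \<noteq> s y)"

fun solit_sem :: "(nat \<Rightarrow> nat list set) \<Rightarrow> (nat \<Rightarrow> nat) \<Rightarrow> solit \<Rightarrow> bool" where
  "solit_sem V s (SPos i zs) = (map s zs \<in> V i)"
| "solit_sem V s (SNeg i zs) = (map s zs \<notin> V i)"
| "solit_sem V s (SNonempty i) = (V i \<noteq> {})"
| "solit_sem V s SBot = False"

fun clause_sem :: "('p \<Rightarrow> nat list set) \<Rightarrow> (nat \<Rightarrow> nat list set) \<Rightarrow> (nat \<Rightarrow> nat) \<Rightarrow> 'p clause \<Rightarrow> bool" where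
  "clause_sem I V s (bs, h1, h2) =
     ((\<exists>b \<in> set bs. folit_sem I s b) \<or> solit_sem V s h1 \<or> solit_sem V s h2)"

text \<open>Evaluation of the prefix from position n on; V interprets R_0..R_(n-1).\<close>
fun pref_sem :: "nat set \<Rightarrow> ('p \<Rightarrow> nat list set) \<Rightarrow> (bool \<times> nat) list \<Rightarrow> nat
                 \<Rightarrow> (nat \<Rightarrow> nat list set) \<Rightarrow> 'p clause list \<Rightarrow> bool" where
  "pref_sem A I [] n V M =
     (\<forall>s. (\<forall>x. s x \<in> A) \<longrightarrow> (\<forall>C \<in> set M. clause_sem I V s C))"
| "pref_sem A I ((e, a) # qs) n V M =
     (if e then (\<exists>R. R \<subseteq> tuples A a \<and> pref_sem A I qs (Suc n) (V(n := R)) M)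
           else (\<forall>R. R \<subseteq> tuples A a \<longrightarrow> pref_sem A I qs (Suc n) (V(n := R)) M))"

definition krom_sat :: "nat set \<Rightarrow> ('p \<Rightarrow> nat list set) \<Rightarrow> 'p krom \<Rightarrow> bool" where
  "krom_sat A I phi = pref_sem A I (kpref phi) 0 (\<lambda>_. {}) (kmat phi)"

definition krom_equiv :: "'p set \<Rightarrow> ('p \<Rightarrow> nat) \<Rightarrow> 'p krom \<Rightarrow> 'p krom \<Rightarrow> bool" where
  "krom_equiv tau ar phi psi \<longleftrightarrow>
     (\<forall>A I. is_structure tau ar A I \<longrightarrow> (krom_sat A I phi \<longleftrightarrow> krom_sat A I psi))"

text \<open>L1 <= L2 over vocabulary tau, where L1 L2 are given by their tau-formulas.\<close>
definition logic_le :: "'p set \<Rightarrow> ('p \<Rightarrow> nat) \<Rightarrow> 'p krom set \<Rightarrow> 'p krom set \<Rightarrow> bool" where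
  "logic_le tau ar L1 L2 \<longleftrightarrow> (\<forall>phi \<in> L1. \<exists>psi \<in> L2. krom_equiv tau ar phi psi)"

end

theory Submission
  imports Defs
begin


lemma remdups_adj_app:
  "xs \<noteq> [] \<Longrightarrow> ys \<noteq> [] \<Longrightarrow> last xs \<noteq> hd ys \<Longrightarrow> remdups_adj (xs @ ys) = remdups_adj xs @ remdups_adj ys"
proof (induction xs rule: remdups_adj.induct)
  case 1 then show ?case by simp
next
  case (2 x) then show ?case by (cases ys) (auto simp: remdups_adj_Cons split: list.split)
next
  case (3 x y xs) then show ?case by auto
qed

lemma alt_last:
  fixes ys :: "bool list"
  shows "ys \<noteq> [] \<Longrightarrow> (\<forall>i. Suc i < length ys \<longrightarrow> ys!i \<noteq> ys!Suc i) \<Longrightarrow>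
    last ys = (if odd (length ys) then hd ys else \<not> hd ys)"
proof (induction ys)
  case Nil then show ?case by simp
next
  case (Cons x ys)
  show ?case
  proof (cases ys)
    case Nil then show ?thesis by simp
  next
    case (Cons y zs)
    have "\<forall>i. Suc i < length ys \<longrightarrow> ys!i \<noteq> ys!Suc i"
      using Cons.prems(2) by (metis Suc_less_eq length_Cons nth_Cons_Suc)
    moreover have "x \<noteq> y" using Cons.prems(2) Cons by (metis length_Cons nth_Cons_0 nth_Cons_Suc zero_less_Suc Suc_less_eq)
    ultimately show ?thesis using Cons.IH Cons by auto
  qed
qed

lemma nblocks_last:
  assumes "pre \<noteq> []"
  shows "fst (last pre) = (if odd (nblocks pre) then fst (hd pre) else \<not> fst (hd pre))"
proof -
  let ?ys = "remdups_adj (map fst pre)"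
  have "last ?ys = (if odd (length ?ys) then hd ?ys else \<not> hd ?ys)"
    using assms remdups_adj_adjacent by (intro alt_last) auto
  then show ?thesis using assms by (simp add: nblocks_def last_map hd_map)
qed


fun mentions :: "nat \<Rightarrow> solit \<Rightarrow> bool" where
  "mentions m (SPos i _) = (i = m)"
| "mentions m (SNeg i _) = (i = m)"
| "mentions m (SNonempty i) = (i = m)"
| "mentions m SBot = False"

fun elimB :: "'p folit list \<Rightarrow> solit \<Rightarrow> solit \<Rightarrow> 'p clause list" where
  "elimB bs (SPos _ z) (SNeg _ z') = map (\<lambda>(x,y). (bs @ [FEq x y], SBot, SBot)) (zip z z')"
| "elimB bs (SNeg _ z) (SPos _ z') = map (\<lambda>(x,y). (bs @ [FEq x y], SBot, SBot)) (zip z z')"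
| "elimB bs (SNonempty _) (SNeg _ _) = []"
| "elimB bs (SNeg _ _) (SNonempty _) = []"
| "elimB bs _ _ = [(bs, SBot, SBot)]"

fun elimC :: "nat \<Rightarrow> 'p clause \<Rightarrow> 'p clause list" where
  "elimC m (bs, h1, h2) =
    (if mentions m h1 \<and> mentions m h2 then elimB bs h1 h2
     else if mentions m h1 then [(bs, SBot, h2)]
     else if mentions m h2 then [(bs, h1, SBot)]
     else [(bs, h1, h2)])"

definition arok :: "nat \<Rightarrow> nat \<Rightarrow> solit \<Rightarrow> bool" where
  "arok m a h \<longleftrightarrow> (\<forall>zs. (h = SPos m zs \<or> h = SNeg m zs) \<longrightarrow> length zs = a)"

lemma sem_unmentioned: "\<not> mentions m h \<Longrightarrow> solit_sem (V(m := R)) s h = solit_sem V s h"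
  by (cases h) auto

lemma map_in_tuples: "\<forall>x. s x \<in> A \<Longrightarrow> length zs = a \<Longrightarrow> map s zs \<in> tuples A a"
  by (auto simp: tuples_def)

lemma falsify:
  assumes "mentions m h" "arok m a h" "\<forall>x. s x \<in> A"
  shows "\<exists>R \<subseteq> tuples A a. \<not> solit_sem (V(m := R)) s h"
  using assms
proof (cases h)
  case (SNeg i zs)
  then show ?thesis using assms map_in_tuples[of s A zs a]
    by (intro exI[of _ "{map s zs}"]) (auto simp: arok_def)
qed auto

lemma zip_eq:
  "length z = length z' \<Longrightarrow> (\<forall>(x,y)\<in>set (zip z z'). s x = s y) \<longleftrightarrow> map s z = map s z'"
proof (induction z arbitrary: z')
  case Nil then show ?case by simp
next
  case (Cons a z) then show ?case by (cases z') auto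
qed

lemma gen_false: "\<exists>R \<subseteq> T. \<not> Q R \<Longrightarrow> (\<forall>R \<subseteq> T. b \<or> Q R) \<longleftrightarrow> b"
  by blast

lemma zip_clauses:
  "length z = length z' \<Longrightarrow> (\<forall>C \<in> set (map (\<lambda>(x,y). (bs @ [FEq x y], SBot, SBot)) (zip z z')). clause_sem I V s C)
   \<longleftrightarrow> (\<exists>b \<in> set bs. folit_sem I s b) \<or> map s z = map s z'"
proof -
  assume l: "length z = length z'"
  have "(\<forall>C \<in> set (map (\<lambda>(x,y). (bs @ [FEq x y], SBot, SBot)) (zip z z')). clause_sem I V s C)
       \<longleftrightarrow> (\<forall>(x,y)\<in>set (zip z z'). (\<exists>b \<in> set bs. folit_sem I s b) \<or> s x = s y)" by auto
  also have "\<dots> \<longleftrightarrow> (\<exists>b \<in> set bs. folit_sem I s b) \<or> (\<forall>(x,y)\<in>set (zip z z'). s x = s y)" by auto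
  also have "\<dots> \<longleftrightarrow> (\<exists>b \<in> set bs. folit_sem I s b) \<or> map s z = map s z'" using zip_eq[OF l, of s] by simp
  finally show ?thesis .
qed

lemma pn_sem: "map s z' \<in> T \<Longrightarrow> (\<forall>R \<subseteq> T. b \<or> map s z \<in> R \<or> map s z' \<notin> R) \<longleftrightarrow> b \<or> map s z = map s z'"
proof
  assume "map s z' \<in> T" "\<forall>R \<subseteq> T. b \<or> map s z \<in> R \<or> map s z' \<notin> R"
  then have "b \<or> map s z \<in> {map s z'} \<or> map s z' \<notin> {map s z'}" by blast
  then show "b \<or> map s z = map s z'" by auto
qed auto

lemma cl_eq: "clause_sem I W s (bs, h1, h2) \<longleftrightarrow> (\<exists>b \<in> set bs. folit_sem I s b) \<or> solit_sem W s h1 \<or> solit_sem W s h2"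
  by simp

lemma elimB_sem:
  assumes "mentions m h1" "mentions m h2" "arok m a h1" "arok m a h2" "\<forall>x. s x \<in> A"
  shows "(\<forall>R \<subseteq> tuples A a. clause_sem I (V(m := R)) s (bs, h1, h2)) \<longleftrightarrow>
         (\<forall>C \<in> set (elimB bs h1 h2). clause_sem I V s C)"
proof -
  let ?b = "\<exists>b \<in> set bs. folit_sem I s b"
  let ?T = "tuples A a"
  have T: "\<And>z. length z = a \<Longrightarrow> map s z \<in> ?T" using assms(5) map_in_tuples by blast
  have L: "(\<forall>R \<subseteq> ?T. clause_sem I (V(m := R)) s (bs, h1, h2)) \<longleftrightarrow>
     (\<forall>R \<subseteq> ?T. ?b \<or> (solit_sem (V(m := R)) s h1 \<or> solit_sem (V(m := R)) s h2))"
    by (simp only: cl_eq)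
  show ?thesis
  proof (cases h1)
    case (SPos i z)
    with assms have i: "i = m" "length z = a" by (auto simp: arok_def)
    show ?thesis
    proof (cases h2)
      case (SPos j z')
      with assms have j: "j = m" by auto
      have "(\<forall>R \<subseteq> ?T. ?b \<or> (solit_sem (V(m := R)) s h1 \<or> solit_sem (V(m := R)) s h2)) \<longleftrightarrow> ?b"
        by (rule gen_false) (use SPos \<open>h1 = _\<close> i j in \<open>intro exI[of _ "{}"], simp\<close>)
      then show ?thesis using L SPos \<open>h1 = _\<close> by simp
    next
      case (SNeg j z')
      with assms have j: "j = m" "length z' = a" by (auto simp: arok_def)
      have "(\<forall>R \<subseteq> ?T. ?b \<or> (solit_sem (V(m := R)) s h1 \<or> solit_sem (V(m := R)) s h2)) \<longleftrightarrow> ?b \<or> map s z = map s z'"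
        using SNeg \<open>h1 = _\<close> i j pn_sem[OF T[OF j(2)], of ?b z] by simp
      then show ?thesis using L SNeg \<open>h1 = _\<close> zip_clauses[of z z' bs I V s] i j by simp
    next
      case (SNonempty j)
      with assms have j: "j = m" by auto
      have "(\<forall>R \<subseteq> ?T. ?b \<or> (solit_sem (V(m := R)) s h1 \<or> solit_sem (V(m := R)) s h2)) \<longleftrightarrow> ?b"
        by (rule gen_false) (use SNonempty \<open>h1 = _\<close> i j in \<open>intro exI[of _ "{}"], simp\<close>)
      then show ?thesis using L SNonempty \<open>h1 = _\<close> by simp
    next
      case SBot with assms show ?thesis by simp
    qed
  next
    case (SNeg i z)
    with assms have i: "i = m" "length z = a" by (auto simp: arok_def)
    show ?thesis
    proof (cases h2)
      case (SPos j z')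
      with assms have j: "j = m" "length z' = a" by (auto simp: arok_def)
      have "(\<forall>R \<subseteq> ?T. ?b \<or> (solit_sem (V(m := R)) s h1 \<or> solit_sem (V(m := R)) s h2)) \<longleftrightarrow>
            (\<forall>R \<subseteq> ?T. ?b \<or> map s z' \<in> R \<or> map s z \<notin> R)"
        using SPos \<open>h1 = _\<close> i j by auto
      also have "\<dots> \<longleftrightarrow> ?b \<or> map s z' = map s z" by (rule pn_sem[OF T[OF i(2)]])
      finally have "(\<forall>R \<subseteq> ?T. ?b \<or> (solit_sem (V(m := R)) s h1 \<or> solit_sem (V(m := R)) s h2)) \<longleftrightarrow> ?b \<or> map s z = map s z'"
        by auto
      then show ?thesis using L SPos \<open>h1 = _\<close> zip_clauses[of z z' bs I V s] i j by simp
    next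
      case (SNeg j z')
      with assms have j: "j = m" "length z' = a" by (auto simp: arok_def)
      have "(\<forall>R \<subseteq> ?T. ?b \<or> (solit_sem (V(m := R)) s h1 \<or> solit_sem (V(m := R)) s h2)) \<longleftrightarrow> ?b"
        by (rule gen_false) (use SNeg \<open>h1 = _\<close> i j T[OF i(2)] T[OF j(2)] in \<open>intro exI[of _ "{map s z, map s z'}"], simp\<close>)
      then show ?thesis using L SNeg \<open>h1 = _\<close> by simp
    next
      case (SNonempty j)
      with assms have j: "j = m" by auto
      have "\<forall>R \<subseteq> ?T. ?b \<or> (solit_sem (V(m := R)) s h1 \<or> solit_sem (V(m := R)) s h2)"
        using SNonempty \<open>h1 = _\<close> i j by auto
      then show ?thesis using L SNonempty \<open>h1 = _\<close> by simp
    next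
      case SBot with assms show ?thesis by simp
    qed
  next
    case (SNonempty i)
    with assms have i: "i = m" by auto
    show ?thesis
    proof (cases h2)
      case (SPos j z')
      with assms have j: "j = m" by auto
      have "(\<forall>R \<subseteq> ?T. ?b \<or> (solit_sem (V(m := R)) s h1 \<or> solit_sem (V(m := R)) s h2)) \<longleftrightarrow> ?b"
        by (rule gen_false) (use SPos \<open>h1 = _\<close> i j in \<open>intro exI[of _ "{}"], simp\<close>)
      then show ?thesis using L SPos \<open>h1 = _\<close> by simp
    next
      case (SNeg j z')
      with assms have j: "j = m" by auto
      have "\<forall>R \<subseteq> ?T. ?b \<or> (solit_sem (V(m := R)) s h1 \<or> solit_sem (V(m := R)) s h2)"
        using SNeg \<open>h1 = _\<close> i j by auto
      then show ?thesis using L SNeg \<open>h1 = _\<close> by simp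
    next
      case (SNonempty j)
      with assms have j: "j = m" by auto
      have "(\<forall>R \<subseteq> ?T. ?b \<or> (solit_sem (V(m := R)) s h1 \<or> solit_sem (V(m := R)) s h2)) \<longleftrightarrow> ?b"
        by (rule gen_false) (use SNonempty \<open>h1 = _\<close> i j in \<open>intro exI[of _ "{}"], simp\<close>)
      then show ?thesis using L SNonempty \<open>h1 = _\<close> by simp
    next
      case SBot with assms show ?thesis by simp
    qed
  next
    case SBot with assms show ?thesis by simp
  qed
qed


lemma elimC_sem:
  assumes "arok m a h1" "arok m a h2" "\<forall>x. s x \<in> A"
  shows "(\<forall>R \<subseteq> tuples A a. clause_sem I (V(m := R)) s (bs, h1, h2)) \<longleftrightarrow>
         (\<forall>C \<in> set (elimC m (bs, h1, h2)). clause_sem I V s C)"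
proof -
  let ?b = "\<exists>b \<in> set bs. folit_sem I s b"
  let ?T = "tuples A a"
  have L: "(\<forall>R \<subseteq> ?T. clause_sem I (V(m := R)) s (bs, h1, h2)) \<longleftrightarrow>
     (\<forall>R \<subseteq> ?T. ?b \<or> (solit_sem (V(m := R)) s h1 \<or> solit_sem (V(m := R)) s h2))"
    by (simp only: cl_eq)
  consider "mentions m h1" "mentions m h2" | "mentions m h1" "\<not> mentions m h2"
    | "\<not> mentions m h1" "mentions m h2" | "\<not> mentions m h1" "\<not> mentions m h2" by blast
  then show ?thesis
  proof cases
    case 1 then show ?thesis using elimB_sem[OF 1 assms] by simp
  next
    case 2
    obtain R0 where R0: "R0 \<subseteq> ?T" "\<not> solit_sem (V(m := R0)) s h1" using falsify[OF 2(1) assms(1) assms(3)] by blast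
    have "(\<forall>R \<subseteq> ?T. ?b \<or> (solit_sem (V(m := R)) s h1 \<or> solit_sem (V(m := R)) s h2)) \<longleftrightarrow>
          (\<forall>R \<subseteq> ?T. (?b \<or> solit_sem V s h2) \<or> solit_sem (V(m := R)) s h1)"
      using sem_unmentioned[OF 2(2)] by (simp add: sem_unmentioned[OF 2(2)] disj_commute disj_left_commute)
    also have "\<dots> \<longleftrightarrow> ?b \<or> solit_sem V s h2" by (rule gen_false) (use R0 in blast)
    finally show ?thesis using L 2 by simp
  next
    case 3
    obtain R0 where R0: "R0 \<subseteq> ?T" "\<not> solit_sem (V(m := R0)) s h2" using falsify[OF 3(2) assms(2) assms(3)] by blast
    have "(\<forall>R \<subseteq> ?T. ?b \<or> (solit_sem (V(m := R)) s h1 \<or> solit_sem (V(m := R)) s h2)) \<longleftrightarrow>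
          (\<forall>R \<subseteq> ?T. (?b \<or> solit_sem V s h1) \<or> solit_sem (V(m := R)) s h2)"
      using sem_unmentioned[OF 3(1)] by (simp add: sem_unmentioned[OF 3(1)] disj_commute disj_left_commute)
    also have "\<dots> \<longleftrightarrow> ?b \<or> solit_sem V s h1" by (rule gen_false) (use R0 in blast)
    finally show ?thesis using L 3 by simp
  next
    case 4
    have "(\<forall>R \<subseteq> ?T. ?b \<or> (solit_sem (V(m := R)) s h1 \<or> solit_sem (V(m := R)) s h2)) \<longleftrightarrow>
          ?b \<or> solit_sem V s h1 \<or> solit_sem V s h2"
      using sem_unmentioned[OF 4(1)] sem_unmentioned[OF 4(2)] by (simp add: sem_unmentioned[OF 4(1)] sem_unmentioned[OF 4(2)]) blast
    then show ?thesis using L 4 by simp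
  qed
qed

lemma pref_elim:
  "\<forall>(bs,h1,h2)\<in>set M. arok (n + length pre) a h1 \<and> arok (n + length pre) a h2 \<Longrightarrow>
   pref_sem A I (pre @ [(False,a)]) n V M = pref_sem A I pre n V (concat (map (elimC (n + length pre)) M))"
proof (induction pre arbitrary: n V)
  case Nil
  have C: "\<And>(s :: nat \<Rightarrow> nat) C. \<forall>x. s x \<in> A \<Longrightarrow> C \<in> set M \<Longrightarrow>
     (\<forall>R \<subseteq> tuples A a. clause_sem I (V(n := R)) s C) \<longleftrightarrow> (\<forall>C' \<in> set (elimC n C). clause_sem I V s C')"
  proof -
    fix s :: "nat \<Rightarrow> nat" and C assume s: "\<forall>x. s x \<in> A" and CM: "C \<in> set M"
    obtain bs h1 h2 where Ce: "C = (bs, h1, h2)" by (cases C) auto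
    show "(\<forall>R \<subseteq> tuples A a. clause_sem I (V(n := R)) s C) \<longleftrightarrow> (\<forall>C' \<in> set (elimC n C). clause_sem I V s C')"
      using Nil.prems CM Ce elimC_sem[of n a h1 h2 s A I V bs] s by fastforce
  qed
  have "pref_sem A I ([] @ [(False,a)]) n V M \<longleftrightarrow>
     (\<forall>R \<subseteq> tuples A a. \<forall>s. (\<forall>x. s x \<in> A) \<longrightarrow> (\<forall>C \<in> set M. clause_sem I (V(n := R)) s C))" by simp
  also have "\<dots> \<longleftrightarrow> (\<forall>s. (\<forall>x. s x \<in> A) \<longrightarrow> (\<forall>C \<in> set M. \<forall>R \<subseteq> tuples A a. clause_sem I (V(n := R)) s C))"
    by auto
  also have "\<dots> \<longleftrightarrow> (\<forall>s. (\<forall>x. s x \<in> A) \<longrightarrow> (\<forall>C \<in> set M. \<forall>C' \<in> set (elimC n C). clause_sem I V s C'))"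
    using C using C by simp
  also have "\<dots> \<longleftrightarrow> pref_sem A I [] n V (concat (map (elimC (n + length [])) M))" by simp
  finally show ?case .
next
  case (Cons q qs)
  obtain e b where q: "q = (e, b)" by (cases q) auto
  have IH: "\<And>V. pref_sem A I (qs @ [(False,a)]) (Suc n) V M = pref_sem A I qs (Suc n) V (concat (map (elimC (n + length (q # qs))) M))"
    using Cons.IH[of "Suc n"] Cons.prems by simp
  show ?case using IH q by simp
qed

lemma elimB_shape:
  "C' \<in> set (elimB bs h1 h2) \<Longrightarrow> fst (snd C') = SBot \<and> snd (snd C') = SBot \<and>
    (\<forall>b \<in> set (fst C'). b \<in> set bs \<or> (\<exists>x y. b = FEq x y))"
  by (induction bs h1 h2 rule: elimB.induct) auto

lemma elimC_shape:
  "C' \<in> set (elimC m (bs, h1, h2)) \<Longrightarrow>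
    (\<forall>b \<in> set (fst C'). b \<in> set bs \<or> (\<exists>x y. b = FEq x y)) \<and>
    (fst (snd C') = SBot \<or> (fst (snd C') = h1 \<and> \<not> mentions m h1)) \<and>
    (snd (snd C') = SBot \<or> (snd (snd C') = h2 \<and> \<not> mentions m h2))"
  using elimB_shape[of C' bs h1 h2] by (auto split: if_splits)

lemma solit_wf_drop: "solit_wf (pre @ [x]) h \<Longrightarrow> \<not> mentions (length pre) h \<Longrightarrow> solit_wf pre h"
  by (cases h) (auto simp: nth_append)

lemma solit_wf_arok: "solit_wf (pre @ [(e, a)]) h \<Longrightarrow> arok (length pre) a h"
  by (cases h) (auto simp: arok_def)

lemma solit_wf_not_mentions: "solit_wf pre h \<Longrightarrow> \<not> mentions (length pre) h"
  by (cases h) auto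

lemma solit_wf_snoc: "solit_wf pre h \<Longrightarrow> solit_wf (pre @ [x]) h"
  by (cases h) (auto simp: nth_append)

lemma elim_step:
  assumes wf: "krom_wf tau ar r (Krom (pre @ [(False, a)]) M)"
  shows "krom_wf tau ar r (Krom pre (concat (map (elimC (length pre)) M))) \<and>
         (\<forall>A I. krom_sat A I (Krom (pre @ [(False, a)]) M) = krom_sat A I (Krom pre (concat (map (elimC (length pre)) M))))"
proof
  have ar: "\<forall>(bs,h1,h2)\<in>set M. arok (0 + length pre) a h1 \<and> arok (0 + length pre) a h2"
    using wf solit_wf_arok unfolding krom_wf_def by fastforce
  show "\<forall>A I. krom_sat A I (Krom (pre @ [(False, a)]) M) = krom_sat A I (Krom pre (concat (map (elimC (length pre)) M)))"
    using pref_elim[OF ar] by (simp add: krom_sat_def)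
  have P1: "\<forall>q \<in> set pre. 1 \<le> snd q \<and> snd q \<le> r"
    using wf unfolding krom_wf_def by auto
  have P2: "(\<forall>b \<in> set bs'. folit_wf tau ar b) \<and> solit_wf pre h1' \<and> solit_wf pre h2'"
    if C'M: "(bs', h1', h2') \<in> set (concat (map (elimC (length pre)) M))" for bs' h1' h2'
  proof -
    let ?C' = "(bs', h1', h2')"
    from C'M obtain C where CM: "C \<in> set M" and C': "?C' \<in> set (elimC (length pre) C)" by auto
    obtain bs h1 h2 where Ce: "C = (bs, h1, h2)" by (cases C) auto
    have w: "(\<forall>b \<in> set bs. folit_wf tau ar b) \<and> solit_wf (pre @ [(False, a)]) h1 \<and> solit_wf (pre @ [(False, a)]) h2"
      using wf CM Ce unfolding krom_wf_def by fastforce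
    have sh: "(\<forall>b \<in> set bs'. b \<in> set bs \<or> (\<exists>x y. b = FEq x y)) \<and>
      (h1' = SBot \<or> (h1' = h1 \<and> \<not> mentions (length pre) h1)) \<and>
      (h2' = SBot \<or> (h2' = h2 \<and> \<not> mentions (length pre) h2))"
      using elimC_shape[of ?C' "length pre" bs h1 h2] C' Ce by simp
    have "(\<forall>b \<in> set bs'. folit_wf tau ar b)" using sh w by auto
    moreover have "solit_wf pre h1'" using sh w solit_wf_drop by fastforce
    moreover have "solit_wf pre h2'" using sh w solit_wf_drop by fastforce
    ultimately show ?thesis by simp
  qed
  show "krom_wf tau ar r (Krom pre (concat (map (elimC (length pre)) M)))"
  proof -
    have P2': "\<forall>(bs', h1', h2') \<in> set (concat (map (elimC (length pre)) M)).
       (\<forall>b \<in> set bs'. folit_wf tau ar b) \<and> solit_wf pre h1' \<and> solit_wf pre h2'"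
      using P2 by blast
    show ?thesis unfolding krom_wf_def krom.sel using P1 P2' by blast
  qed
qed

lemma elim_all:
  "\<forall>q \<in> set Q. fst q = False \<Longrightarrow> krom_wf tau ar r (Krom (P @ Q) M) \<Longrightarrow>
   \<exists>M'. krom_wf tau ar r (Krom P M') \<and> (\<forall>A I. krom_sat A I (Krom (P @ Q) M) = krom_sat A I (Krom P M'))"
proof (induction Q arbitrary: M rule: rev_induct)
  case Nil then show ?case by auto
next
  case (snoc q Q)
  obtain a where q: "q = (False, a)" using snoc.prems(1) by (cases q) auto
  have wf: "krom_wf tau ar r (Krom ((P @ Q) @ [(False, a)]) M)" using snoc.prems(2) q by simp
  from elim_step[OF wf] obtain M1 where M1: "krom_wf tau ar r (Krom (P @ Q) M1)"
    "\<forall>A I. krom_sat A I (Krom ((P @ Q) @ [(False, a)]) M) = krom_sat A I (Krom (P @ Q) M1)" by blast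
  from snoc.IH[OF _ M1(1)] snoc.prems(1) obtain M' where
    "krom_wf tau ar r (Krom P M')" "\<forall>A I. krom_sat A I (Krom (P @ Q) M1) = krom_sat A I (Krom P M')" by auto
  then show ?case using M1(2) q by auto
qed

lemma map_fst_false: "\<forall>q \<in> set Q. fst q = False \<Longrightarrow> map fst Q = replicate (length Q) False"
  by (induction Q) auto

lemma down_gen:
  assumes wf: "krom_wf tau ar r phi" and ne: "kpref phi \<noteq> []" and last: "fst (last (kpref phi)) = False"
    and nb: "nblocks (kpref phi) \<ge> 2"
  shows "\<exists>psi. krom_wf tau ar r psi \<and> kpref psi \<noteq> [] \<and> fst (hd (kpref psi)) = fst (hd (kpref phi)) \<and>
     nblocks (kpref psi) + 1 = nblocks (kpref phi) \<and> krom_equiv tau ar phi psi"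
proof -
  let ?pre = "kpref phi"
  define Q where "Q = rev (takeWhile (\<lambda>q. \<not> fst q) (rev ?pre))"
  define P where "P = rev (dropWhile (\<lambda>q. \<not> fst q) (rev ?pre))"
  have PQ: "?pre = P @ Q" unfolding P_def Q_def
    by (metis rev_append rev_rev_ident takeWhile_dropWhile_id)
  have Qf: "\<forall>q \<in> set Q. fst q = False" unfolding Q_def by (auto dest: set_takeWhileD)
  have Qne: "Q \<noteq> []"
  proof -
    obtain xs x where "?pre = xs @ [x]" using ne by (metis rev_exhaust)
    then show ?thesis using last unfolding Q_def by simp
  qed
  have Pne: "P \<noteq> []"
  proof
    assume "P = []"
    then have "map fst ?pre = replicate (length Q) False" using PQ Qf map_fst_false by simp
    then have "nblocks ?pre = 1" using Qne by (simp add: nblocks_def remdups_adj_replicate)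
    then show False using nb by simp
  qed
  have Plast: "fst (last P) = True"
  proof -
    have d: "dropWhile (\<lambda>q. \<not> fst q) (rev ?pre) \<noteq> []" using Pne unfolding P_def by simp
    have "last P = hd (dropWhile (\<lambda>q. \<not> fst q) (rev ?pre))" unfolding P_def using d
      by (simp add: last_rev)
    then show ?thesis using hd_dropWhile[OF d] by simp
  qed
  have nbPQ: "nblocks ?pre = nblocks P + 1"
  proof -
    have "map fst ?pre = map fst P @ replicate (length Q) False" using PQ Qf map_fst_false by simp
    moreover have "last (map fst P) \<noteq> hd (replicate (length Q) False)" using Plast Pne Qne
      by (simp add: last_map)
    ultimately have "remdups_adj (map fst ?pre) = remdups_adj (map fst P) @ [False]"
      using remdups_adj_app[of "map fst P" "replicate (length Q) False"] Pne Qne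
      by (simp add: remdups_adj_replicate)
    then show ?thesis by (simp add: nblocks_def)
  qed
  obtain M where phi: "phi = Krom (P @ Q) M" using PQ by (cases phi) auto
  from elim_all[OF Qf, of tau ar r P M] wf phi obtain M' where
    M': "krom_wf tau ar r (Krom P M')" "\<forall>A I. krom_sat A I (Krom (P @ Q) M) = krom_sat A I (Krom P M')" by auto
  show ?thesis
    using M' Pne nbPQ PQ phi by (intro exI[of _ "Krom P M'"]) (auto simp: krom_equiv_def)
qed

lemma up_gen:
  assumes wf: "krom_wf tau ar r phi" and ne: "kpref phi \<noteq> []" and last: "fst (last (kpref phi)) = True"
  shows "\<exists>psi. krom_wf tau ar r psi \<and> kpref psi \<noteq> [] \<and> fst (hd (kpref psi)) = fst (hd (kpref phi)) \<and>
     nblocks (kpref psi) = nblocks (kpref phi) + 1 \<and> krom_equiv tau ar phi psi"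
proof -
  obtain pre M where phi: "phi = Krom pre M" by (cases phi) auto
  have r1: "1 \<le> r" using wf ne phi unfolding krom_wf_def by (cases pre) auto
  have wf2: "krom_wf tau ar r (Krom (pre @ [(False, 1)]) M)"
    using wf r1 phi solit_wf_snoc unfolding krom_wf_def by fastforce
  have id: "concat (map (elimC (length pre)) M) = M"
  proof -
    have "\<forall>C \<in> set M. elimC (length pre) C = [C]"
    proof
      fix C assume "C \<in> set M"
      moreover obtain bs h1 h2 where "C = (bs, h1, h2)" by (cases C) auto
      ultimately show "elimC (length pre) C = [C]"
        using wf phi solit_wf_not_mentions unfolding krom_wf_def by fastforce
    qed
    then show ?thesis by (induction M) auto
  qed
  have eq: "\<forall>A I. krom_sat A I (Krom (pre @ [(False, 1)]) M) = krom_sat A I (Krom pre M)"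
    using elim_step[OF wf2] id by simp
  have nb: "nblocks (pre @ [(False, 1)]) = nblocks pre + 1"
    using remdups_adj_app[of "map fst pre" "[False]"] ne last phi
    by (simp add: nblocks_def last_map)
  show ?thesis using wf2 eq nb phi ne
    by (intro exI[of _ "Krom (pre @ [(False, 1)]) M"]) (auto simp: krom_equiv_def)
qed

theorem corollary2p2:
  fixes tau :: "'p set" and ar :: "'p \<Rightarrow> nat" and r k :: nat
  assumes "finite tau" and "1 \<le> k"
  shows "(odd k \<longrightarrow>
            logic_le tau ar (Sigma_krom tau ar r k) (Sigma_krom tau ar r (k + 1)) \<and>
            logic_le tau ar (Sigma_krom tau ar r (k + 1)) (Sigma_krom tau ar r k))
       \<and> (even k \<longrightarrow>
            logic_le tau ar (Pi_krom tau ar r k) (Pi_krom tau ar r (k + 1)) \<and>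
            logic_le tau ar (Pi_krom tau ar r (k + 1)) (Pi_krom tau ar r k))"
proof (intro conjI impI)
  assume o: "odd k"
  show "logic_le tau ar (Sigma_krom tau ar r k) (Sigma_krom tau ar r (k + 1))"
    unfolding logic_le_def
  proof
    fix phi assume "phi \<in> Sigma_krom tau ar r k"
    then have p: "krom_wf tau ar r phi" "kpref phi \<noteq> []" "fst (hd (kpref phi)) = True" "nblocks (kpref phi) = k"
      by (auto simp: Sigma_krom_def)
    then have "fst (last (kpref phi)) = True" using nblocks_last[OF p(2)] o by simp
    from up_gen[OF p(1,2) this] p show "\<exists>psi \<in> Sigma_krom tau ar r (k + 1). krom_equiv tau ar phi psi"
      by (auto simp: Sigma_krom_def)
  qed
  show "logic_le tau ar (Sigma_krom tau ar r (k + 1)) (Sigma_krom tau ar r k)"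
    unfolding logic_le_def
  proof
    fix phi assume "phi \<in> Sigma_krom tau ar r (k + 1)"
    then have p: "krom_wf tau ar r phi" "kpref phi \<noteq> []" "fst (hd (kpref phi)) = True" "nblocks (kpref phi) = k + 1"
      by (auto simp: Sigma_krom_def)
    then have "fst (last (kpref phi)) = False" using nblocks_last[OF p(2)] o by simp
    from down_gen[OF p(1,2) this] p assms(2) show "\<exists>psi \<in> Sigma_krom tau ar r k. krom_equiv tau ar phi psi"
      by (auto simp: Sigma_krom_def)
  qed
next
  assume e: "even k"
  show "logic_le tau ar (Pi_krom tau ar r k) (Pi_krom tau ar r (k + 1))"
    unfolding logic_le_def
  proof
    fix phi assume "phi \<in> Pi_krom tau ar r k"
    then have p: "krom_wf tau ar r phi" "kpref phi \<noteq> []" "fst (hd (kpref phi)) = False" "nblocks (kpref phi) = k"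
      by (auto simp: Pi_krom_def)
    then have "fst (last (kpref phi)) = True" using nblocks_last[OF p(2)] e by simp
    from up_gen[OF p(1,2) this] p show "\<exists>psi \<in> Pi_krom tau ar r (k + 1). krom_equiv tau ar phi psi"
      by (auto simp: Pi_krom_def)
  qed
  show "logic_le tau ar (Pi_krom tau ar r (k + 1)) (Pi_krom tau ar r k)"
    unfolding logic_le_def
  proof
    fix phi assume "phi \<in> Pi_krom tau ar r (k + 1)"
    then have p: "krom_wf tau ar r phi" "kpref phi \<noteq> []" "fst (hd (kpref phi)) = False" "nblocks (kpref phi) = k + 1"
      by (auto simp: Pi_krom_def)
    then have "fst (last (kpref phi)) = False" using nblocks_last[OF p(2)] e by simp
    from down_gen[OF p(1,2) this] p assms(2) show "\<exists>psi \<in> Pi_krom tau ar r k. krom_equiv tau ar phi psi"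
      by (auto simp: Pi_krom_def)
  qed
qed

end
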